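(* Fix $d\ge1$ and $\varepsilon>0$. If $f_1,f_2\in\mathsf{Tree}_d$ satisfy $\mathrm{MSE}(f_i)\le R(\mathsf{Tree}_d)+\varepsilon$ for $i\in\{1,2\}$, then \[ D(f_1,f_2)\le4\big(R(\mathsf{Tree}_d)-R(\mathsf{Tree}_{2d})+\varepsilon\big). \]
   Context: $P$ is a distribution on $\mathcal X\times\mathcal Y$ with $\mathcal X\subseteq\mathbb R^m$, $\mathcal Y\subseteq\mathbb R$; expectations are over $(x,y)\sim P$; $\mathrm{MSE}(f)=\mathbb E[(y-f(x))^2]$, $R(\mathcal F)=\inf_{f\in\mathcal F}\mathrm{MSE}(f)$, $D(f_1,f_2)=\mathbb E[(f_1(x)-f_2(x))^2]$. An axis-aligned regression tree is a rooted binary tree each internal node of which is labeled by a coordinate $j\in[m]$ and threshold $t\in\mathbb R$ and sends $x$ to the left child if $x_j\le t$ and to the right child otherwise; each leaf is labeled by a constant in $[0,1]$; the tree computes the label of the leaf reached by $x$. $\mathsf{Tree}_d$ is the class of predictors computed by such trees of depth at most $d$. *)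

theory Defs
  imports "HOL-Probability.Probability"
begin

datatype 'm rtree = Leaf real | Node 'm real "'m rtree" "'m rtree"

fun eval_tree :: "'m rtree \<Rightarrow> real ^ 'm \<Rightarrow> real" where
  "eval_tree (Leaf c) x = c"
| "eval_tree (Node j t l r) x = (if x $ j \<le> t then eval_tree l x else eval_tree r x)"

fun depth :: "'m rtree \<Rightarrow> nat" where
  "depth (Leaf c) = 0"
| "depth (Node j t l r) = Suc (max (depth l) (depth r))"

fun labels_ok :: "'m rtree \<Rightarrow> bool" where
  "labels_ok (Leaf c) \<longleftrightarrow> 0 \<le> c \<and> c \<le> 1"
| "labels_ok (Node j t l r) \<longleftrightarrow> labels_ok l \<and> labels_ok r"

definition Tree :: "nat \<Rightarrow> (real ^ 'm \<Rightarrow> real) set" where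
  "Tree d = {eval_tree T | T. labels_ok T \<and> depth T \<le> d}"

definition MSE :: "((real ^ 'm) \<times> real) measure \<Rightarrow> (real ^ 'm \<Rightarrow> real) \<Rightarrow> real" where
  "MSE P f = (\<integral>z. (snd z - f (fst z))\<^sup>2 \<partial>P)"

definition Risk :: "((real ^ 'm) \<times> real) measure \<Rightarrow> (real ^ 'm \<Rightarrow> real) set \<Rightarrow> real" where
  "Risk P F = (INF f\<in>F. MSE P f)"

definition Dist :: "((real ^ 'm) \<times> real) measure \<Rightarrow> (real ^ 'm \<Rightarrow> real) \<Rightarrow> (real ^ 'm \<Rightarrow> real) \<Rightarrow> real" where
  "Dist P f1 f2 = (\<integral>z. (f1 (fst z) - f2 (fst z))\<^sup>2 \<partial>P)"

end

theory Submission imports Defs begin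

lemma eval_meas: "eval_tree T \<in> borel_measurable borel"
proof (induction T)
  case (Leaf c) then show ?case by simp
next
  case (Node j t l r)
  have A: "{x::real^'a. x $ j \<le> t} \<in> sets borel"
    by (rule borel_closed, rule closed_Collect_le) (auto intro: continuous_intros)
  have eq: "eval_tree (Node j t l r) = (\<lambda>x. if x \<in> {x. x $ j \<le> t} then eval_tree l x else eval_tree r x)"
    by (rule ext) simp
  show ?case unfolding eq
    by (rule measurable_If_set[OF Node(1) Node(2)]) (use A in simp)
qed

lemma eval_bounds: "labels_ok T \<Longrightarrow> 0 \<le> eval_tree T x \<and> eval_tree T x \<le> 1"
  by (induction T) auto

fun avgl :: "real \<Rightarrow> 'm rtree \<Rightarrow> 'm rtree" where
  "avgl c (Leaf c') = Leaf ((c + c') / 2)"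
| "avgl c (Node j t l r) = Node j t (avgl c l) (avgl c r)"

fun comb :: "'m rtree \<Rightarrow> 'm rtree \<Rightarrow> 'm rtree" where
  "comb (Leaf c) S = avgl c S"
| "comb (Node j t l r) S = Node j t (comb l S) (comb r S)"

lemma avgl_props: "eval_tree (avgl c S) x = (c + eval_tree S x) / 2"
  "depth (avgl c S) = depth S"
  "0 \<le> c \<Longrightarrow> c \<le> 1 \<Longrightarrow> labels_ok S \<Longrightarrow> labels_ok (avgl c S)"
  by (induction S) auto

lemma comb_props: "eval_tree (comb T S) x = (eval_tree T x + eval_tree S x) / 2"
  "depth (comb T S) \<le> depth T + depth S"
  "labels_ok T \<Longrightarrow> labels_ok S \<Longrightarrow> labels_ok (comb T S)"
  by (induction T) (auto simp: avgl_props)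

lemma sq_bound: "0 \<le> (c::real) \<Longrightarrow> c \<le> 1 \<Longrightarrow> (y - c)\<^sup>2 \<le> 2 * y\<^sup>2 + 2"
proof -
  assume "0 \<le> c" "c \<le> 1"
  then have "c\<^sup>2 \<le> 1" by (simp add: power_le_one)
  moreover have "(y - c)\<^sup>2 \<le> 2 * y\<^sup>2 + 2 * c\<^sup>2" using zero_le_power2[of "y + c"]
    by (simp add: power2_eq_square algebra_simps)
  ultimately show ?thesis by linarith
qed

lemma tree_meas:
  fixes P :: "((real ^ 'm) \<times> real) measure"
  assumes "sets P = sets borel"
  shows "(\<lambda>z. eval_tree T (fst z)) \<in> borel_measurable P"
proof -
  have "(\<lambda>z. eval_tree T (fst z)) \<in> borel_measurable (borel :: ((real ^ 'm) \<times> real) measure)"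
    by (rule measurable_compose[OF _ eval_meas[of T]])
       (intro borel_measurable_continuous_onI continuous_on_fst continuous_on_id)
  moreover have "borel_measurable P = borel_measurable (borel :: ((real ^ 'm) \<times> real) measure)"
    by (rule measurable_cong_sets[OF assms refl])
  ultimately show ?thesis by (metis (no_types))
qed

lemma snd_meas:
  fixes P :: "((real ^ 'm) \<times> real) measure"
  assumes "sets P = sets borel"
  shows "(\<lambda>z. snd z) \<in> borel_measurable P"
proof -
  have "(\<lambda>z. snd z) \<in> borel_measurable (borel :: ((real ^ 'm) \<times> real) measure)"
    by (intro borel_measurable_continuous_onI continuous_on_snd continuous_on_id)
  moreover have "borel_measurable P = borel_measurable (borel :: ((real ^ 'm) \<times> real) measure)"
    by (rule measurable_cong_sets[OF assms refl])
  ultimately show ?thesis by (metis (no_types))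
qed

lemma tree_int:
  fixes P :: "((real ^ 'm) \<times> real) measure"
  assumes "sets P = sets borel" "integrable P (\<lambda>z. (snd z)\<^sup>2)" "prob_space P" "labels_ok T"
  shows "integrable P (\<lambda>z. (snd z - eval_tree T (fst z))\<^sup>2)"
proof (rule Bochner_Integration.integrable_bound)
  interpret prob_space P by fact
  show "integrable P (\<lambda>z. 2 * (snd z)\<^sup>2 + 2)" using assms(2) by simp
  show "(\<lambda>z. (snd z - eval_tree T (fst z))\<^sup>2) \<in> borel_measurable P"
    using tree_meas[OF assms(1)] snd_meas[OF assms(1)] by measurable
  show "AE z in P. norm ((snd z - eval_tree T (fst z))\<^sup>2) \<le> norm (2 * (snd z)\<^sup>2 + 2)"
    using eval_bounds[OF assms(4)] sq_bound by (auto intro!: AE_I2)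
qed

lemma diff_int:
  fixes P :: "((real ^ 'm) \<times> real) measure"
  assumes "sets P = sets borel" "prob_space P" "labels_ok T1" "labels_ok T2"
  shows "integrable P (\<lambda>z. (eval_tree T1 (fst z) - eval_tree T2 (fst z))\<^sup>2)"
proof -
  interpret prob_space P by fact
  show ?thesis
  proof (rule integrable_const_bound[where B=1])
    show "AE z in P. norm ((eval_tree T1 (fst z) - eval_tree T2 (fst z))\<^sup>2) \<le> 1"
    proof (rule AE_I2)
      fix z
      have a: "\<bar>eval_tree T1 (fst z) - eval_tree T2 (fst z)\<bar> \<le> 1"
        using eval_bounds[OF assms(3), of "fst z"] eval_bounds[OF assms(4), of "fst z"] by (auto simp: abs_if)
      show "norm ((eval_tree T1 (fst z) - eval_tree T2 (fst z))\<^sup>2) \<le> 1"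
        using power_mono[OF a, of 2] by simp
    qed
    show "(\<lambda>z. (eval_tree T1 (fst z) - eval_tree T2 (fst z))\<^sup>2) \<in> borel_measurable P"
      using tree_meas[OF assms(1)] by measurable
  qed
qed

lemma MSE_nonneg: "0 \<le> MSE P f"
  unfolding MSE_def by (rule integral_nonneg_AE) simp

lemma Risk_le: "f \<in> F \<Longrightarrow> Risk P F \<le> MSE P f"
  unfolding Risk_def by (rule cINF_lower) (auto intro: bdd_belowI[of _ 0] MSE_nonneg)

theorem corollary3:
  fixes P :: "((real ^ 'm) \<times> real) measure"
    and d :: nat and \<epsilon> :: real and f1 f2 :: "real ^ 'm \<Rightarrow> real"
  assumes "prob_space P"
    and "sets P = sets borel"
    and "integrable P (\<lambda>z. (snd z)\<^sup>2)"
    and "d \<ge> 1" and "\<epsilon> > 0"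
    and "f1 \<in> Tree d" and "f2 \<in> Tree d"
    and "MSE P f1 \<le> Risk P (Tree d) + \<epsilon>"
    and "MSE P f2 \<le> Risk P (Tree d) + \<epsilon>"
  shows "Dist P f1 f2 \<le> 4 * (Risk P (Tree d) - Risk P (Tree (2 * d)) + \<epsilon>)"
proof -
  obtain T1 where T1: "f1 = eval_tree T1" "labels_ok T1" "depth T1 \<le> d"
    using assms(6) unfolding Tree_def by blast
  obtain T2 where T2: "f2 = eval_tree T2" "labels_ok T2" "depth T2 \<le> d"
    using assms(7) unfolding Tree_def by blast
  define T where "T = comb T1 T2"
  have Tok: "labels_ok T" using T1 T2 comb_props(3) T_def by blast
  have "depth T \<le> 2 * d" using comb_props(2)[of T1 T2] T1 T2 T_def by simp
  then have gT: "eval_tree T \<in> Tree (2 * d)" using Tok unfolding Tree_def by blast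
  have pt: "(snd z - eval_tree T (fst z))\<^sup>2 =
      (snd z - f1 (fst z))\<^sup>2 / 2 + (snd z - f2 (fst z))\<^sup>2 / 2 - (f1 (fst z) - f2 (fst z))\<^sup>2 / 4" for z
    unfolding T_def comb_props(1) T1(1) T2(1) by (simp add: power2_eq_square field_simps)
  have i1: "integrable P (\<lambda>z. (snd z - f1 (fst z))\<^sup>2)" using tree_int[OF assms(2,3,1) T1(2)] T1(1) by simp
  have i2: "integrable P (\<lambda>z. (snd z - f2 (fst z))\<^sup>2)" using tree_int[OF assms(2,3,1) T2(2)] T2(1) by simp
  have i3: "integrable P (\<lambda>z. (f1 (fst z) - f2 (fst z))\<^sup>2)" using diff_int[OF assms(2,1) T1(2) T2(2)] T1(1) T2(1) by simp
  have "MSE P (eval_tree T) = MSE P f1 / 2 + MSE P f2 / 2 - Dist P f1 f2 / 4"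
    unfolding MSE_def Dist_def pt using i1 i2 i3 by simp
  moreover have "Risk P (Tree (2 * d)) \<le> MSE P (eval_tree T)" using Risk_le[OF gT] .
  ultimately have "Dist P f1 f2 \<le> 2 * MSE P f1 + 2 * MSE P f2 - 4 * Risk P (Tree (2 * d))" by linarith
  then show ?thesis using assms(8,9) by (simp add: algebra_simps)
qed

end
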